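(* There exist absolute constants $A, C > 0$ such that for all integers $1 \le k \le d$, the Greedy algorithm (defined in the context), viewed as a map $c$ sending each finite point set $P \subset \mathbb{R}^d$ to its output $c(P)$, is an $\alpha$-composable core-set of size $k$ for the determinant maximization problem with parameter $k$, where $\alpha = A\cdot C^{k^2}$. That is, $|c(P)|\le k$ for every $P$, and for every integer $m \ge 1$ and all finite point sets $P_1,\dots,P_m \subset \mathbb{R}^d$, $$\mathrm{MAXDET}_k\Big(\bigcup_{i=1}^m c(P_i)\Big) \ge \frac{1}{\alpha}\,\mathrm{MAXDET}_k\Big(\bigcup_{i=1}^m P_i\Big).$$
   Context: For a finite set $S=\{v_1,\dots,v_k\}\subset\mathbb{R}^d$, let $M_S$ be the $k\times d$ matrix whose rows are the points of $S$; $\det(M_SM_S^\top)$ equals the square of the $k$-dimensional volume $\mathrm{VOL}(S)$ of the parallelepiped spanned by $S$. For a finite $P\subset\mathbb{R}^d$, $\mathrm{MAXDET}_k(P)=\max_{S\subseteq P,\,|S|=k}\det(M_SM_S^\top)$. For a set $C$ of points, $\langle C\rangle$ denotes its linear span, and $\mathrm{dist}(p,\mathcal{H})$ is the Euclidean distance from point $p$ to subspace $\mathcal{H}$. The Greedy algorithm on input $P$ and $k$: start with $\mathcal{C}=\emptyset$; for $k$ iterations, add to $\mathcal{C}$ a point $\arg\max_{p\in P}\mathrm{dist}(p,\langle\mathcal{C}\rangle)$; output $\mathcal{C}$. A map $c$ from point sets to subsets of themselves is an $\alpha$-composable core-set for determinant maximization if the displayed inequality holds for every collection $P_1,\dots,P_m$;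 it has size $t$ if $|c(P)|\le t$ for all $P$. *)

theory Defs
  imports "Jordan_Normal_Form.Determinant"
begin

text \<open>Points of R^d are vectors of dimension d (carrier_vec d).\<close>

definition lin_comb :: "nat \<Rightarrow> real list \<Rightarrow> real vec list \<Rightarrow> real vec" where
  "lin_comb d cs vs = foldr (\<lambda>(c, v) acc. c \<cdot>\<^sub>v v + acc) (zip cs vs) (0\<^sub>v d)"

definition lin_span :: "nat \<Rightarrow> real vec set \<Rightarrow> real vec set" where
  "lin_span d S = {lin_comb d cs vs | cs vs. set vs \<subseteq> S \<and> length cs = length vs}"

definition enorm :: "real vec \<Rightarrow> real" where
  "enorm v = sqrt (v \<bullet> v)"

definition dist_span :: "nat \<Rightarrow> real vec \<Rightarrow> real vec set \<Rightarrow> real" where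
  "dist_span d p S = Inf {enorm (p - w) | w. w \<in> lin_span d S}"

definition gram_det :: "nat \<Rightarrow> real vec list \<Rightarrow> real" where
  "gram_det d vs = det (mat_of_rows d vs * transpose_mat (mat_of_rows d vs))"

text \<open>MAXDET_k(P): maximum over k-subsets S of P (listed in any order, which does not
  affect the value); convention 0 if P has fewer than k points.\<close>
definition maxdet :: "nat \<Rightarrow> nat \<Rightarrow> real vec set \<Rightarrow> real" where
  "maxdet d k P =
     (if \<exists>vs. distinct vs \<and> set vs \<subseteq> P \<and> length vs = k
      then Max {gram_det d vs | vs. distinct vs \<and> set vs \<subseteq> P \<and> length vs = k}
      else 0)"

text \<open>All possible runs of Greedy (any tie-breaking) for n iterations, as the list of
  chosen points in order.\<close>
fun greedy_runs :: "nat \<Rightarrow> real vec set \<Rightarrow> nat \<Rightarrow> real vec list set" where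
  "greedy_runs d P 0 = {[]}"
| "greedy_runs d P (Suc n) =
     {cs @ [p] | cs p. cs \<in> greedy_runs d P n \<and> p \<in> P \<and>
        (\<forall>q\<in>P. dist_span d q (set cs) \<le> dist_span d p (set cs))}"

definition greedy_outputs :: "nat \<Rightarrow> nat \<Rightarrow> real vec set \<Rightarrow> real vec set set" where
  "greedy_outputs d k P = set ` greedy_runs d P k"

end

theory Submission
  imports Defs
begin

lemma sp_ge0: "(v::real vec) \<bullet> v \<ge> 0"
  unfolding scalar_prod_def by (auto intro: sum_nonneg)

lemma sp_eq0: assumes "(v::real vec) \<in> carrier_vec n" "v \<bullet> v = 0" shows "v = 0\<^sub>v n"
proof -
  have "\<forall>i\<in>{0..<dim_vec v}. v$i * v$i = 0"
    using assms(2) unfolding scalar_prod_def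
    by (subst sum_nonneg_eq_0_iff[symmetric]) auto
  thus ?thesis using assms(1) by (intro eq_vecI) auto
qed

lemma cauchy_schwarz_vec: assumes "(x::real vec) \<in> carrier_vec n" "y \<in> carrier_vec n"
  shows "(x \<bullet> y)^2 \<le> (x \<bullet> x) * (y \<bullet> y)"
proof (cases "y \<bullet> y = 0")
  case True
  then have "y = 0\<^sub>v n" using sp_eq0 assms by blast
  then show ?thesis using assms by simp
next
  case False
  then have yy: "y \<bullet> y > 0" using sp_ge0[of y] by linarith
  define t where "t = (x \<bullet> y) / (y \<bullet> y)"
  have "0 \<le> (x - t \<cdot>\<^sub>v y) \<bullet> (x - t \<cdot>\<^sub>v y)" by (rule sp_ge0)
  also have "\<dots> = x \<bullet> x - 2 * t * (x \<bullet> y) + t*t*(y \<bullet> y)"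
    using assms by (simp add: minus_scalar_prod_distrib[of _ n] scalar_prod_minus_distrib[of _ n]
        comm_scalar_prod[of y n x] algebra_simps)
  also have "\<dots> = x \<bullet> x - (x \<bullet> y)^2 / (y \<bullet> y)"
    using yy unfolding t_def by (simp add: field_simps power2_eq_square)
  finally show ?thesis using yy by (simp add: field_simps)
qed

lemma enorm_ge0: "enorm v \<ge> 0" unfolding enorm_def by (simp add: sp_ge0)

lemma enorm_sq: "(enorm v)^2 = v \<bullet> v" unfolding enorm_def using sp_ge0[of v] by simp

lemma abs_sp_le: assumes "(x::real vec) \<in> carrier_vec n" "y \<in> carrier_vec n"
  shows "\<bar>x \<bullet> y\<bar> \<le> enorm x * enorm y"
proof -
  have "(x \<bullet> y)^2 \<le> (enorm x * enorm y)^2"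
    using cauchy_schwarz_vec[OF assms] by (simp add: power_mult_distrib enorm_sq)
  then have "\<bar>x \<bullet> y\<bar> \<le> \<bar>enorm x * enorm y\<bar>" by (simp only: abs_le_square_iff)
  thus ?thesis using enorm_ge0[of x] enorm_ge0[of y] by simp
qed

lemma enorm_triangle: assumes "(x::real vec) \<in> carrier_vec n" "y \<in> carrier_vec n"
  shows "enorm (x + y) \<le> enorm x + enorm y"
proof -
  have cs: "x \<bullet> y \<le> enorm x * enorm y"
    using abs_sp_le[OF assms] by linarith
  have "(enorm (x + y))^2 = x \<bullet> x + 2 * (x \<bullet> y) + y \<bullet> y"
    using assms by (simp add: enorm_sq add_scalar_prod_distrib[of _ n] scalar_prod_add_distrib[of _ n]
        comm_scalar_prod[of y n x])
  also have "\<dots> \<le> (enorm x + enorm y)^2"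
    using cs by (simp add: power2_sum enorm_sq)
  finally have "(enorm (x + y))^2 \<le> (enorm x + enorm y)^2" .
  then show ?thesis 
    by (rule power2_le_imp_le) (simp add: enorm_ge0 add_nonneg_nonneg)
qed

lemma enorm_smult: "enorm (a \<cdot>\<^sub>v (v::real vec)) = \<bar>a\<bar> * enorm v"
proof -
  have "(a \<cdot>\<^sub>v v) \<bullet> (a \<cdot>\<^sub>v v) = a^2 * (v \<bullet> v)"
    unfolding scalar_prod_def by (simp add: sum_distrib_left power2_eq_square algebra_simps)
  thus ?thesis unfolding enorm_def by (simp add: real_sqrt_mult)
qed

lemma lin_comb_Nil1[simp]: "lin_comb d [] vs = 0\<^sub>v d" unfolding lin_comb_def by simp
lemma lin_comb_Nil2[simp]: "lin_comb d cs [] = 0\<^sub>v d" unfolding lin_comb_def by simp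
lemma lin_comb_Cons[simp]: "lin_comb d (c#cs) (v#vs) = c \<cdot>\<^sub>v v + lin_comb d cs vs"
  unfolding lin_comb_def by simp

lemma lin_comb_carrier[simp]: "set vs \<subseteq> carrier_vec d \<Longrightarrow> lin_comb d cs vs \<in> carrier_vec d"
proof (induction vs arbitrary: cs)
  case Nil then show ?case by simp
next
  case (Cons v vs) then show ?case by (cases cs) auto
qed

lemma lin_comb_append: "length cs1 = length vs1 \<Longrightarrow> set vs1 \<subseteq> carrier_vec d \<Longrightarrow> set vs2 \<subseteq> carrier_vec d \<Longrightarrow>
  lin_comb d (cs1 @ cs2) (vs1 @ vs2) = lin_comb d cs1 vs1 + lin_comb d cs2 vs2"
proof (induction vs1 arbitrary: cs1)
  case Nil then show ?case by simp
next
  case (Cons v vs) then show ?case by (cases cs1) (auto simp: add.assoc)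
qed

lemma lin_comb_smult: "set vs \<subseteq> carrier_vec d \<Longrightarrow>
   a \<cdot>\<^sub>v lin_comb d cs vs = lin_comb d (map ((*) a) cs) vs"
proof (induction vs arbitrary: cs)
  case Nil then show ?case by (cases cs) auto
next
  case (Cons v vs) then show ?case
    by (cases cs) (auto simp: smult_add_distrib_vec[of _ d] smult_smult_assoc)
qed

lemma lin_comb_sp: "set vs \<subseteq> carrier_vec d \<Longrightarrow> y \<in> carrier_vec d \<Longrightarrow>
   lin_comb d cs vs \<bullet> y = (\<Sum>(c,v)\<leftarrow>zip cs vs. c * (v \<bullet> y))"
proof (induction vs arbitrary: cs)
  case Nil then show ?case by (cases cs) auto
next
  case (Cons v vs) then show ?case
    by (cases cs) (auto simp: add_scalar_prod_distrib[of _ d])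
qed

lemma lin_comb_norm: "set vs \<subseteq> carrier_vec d \<Longrightarrow>
   enorm (lin_comb d cs vs) \<le> (\<Sum>(c,v)\<leftarrow>zip cs vs. \<bar>c\<bar> * enorm v)"
proof (induction vs arbitrary: cs)
  case Nil then show ?case by (cases cs) (auto simp: enorm_def)
next
  case (Cons v vs)
  show ?case
  proof (cases cs)
    case Nil then show ?thesis by (simp add: enorm_def)
  next
    case (Cons c cs')
    have "enorm (lin_comb d cs (v#vs)) \<le> enorm (c \<cdot>\<^sub>v v) + enorm (lin_comb d cs' vs)"
      using Cons.prems Cons by (auto intro!: enorm_triangle[of _ d])
    also have "\<dots> \<le> \<bar>c\<bar> * enorm v + (\<Sum>(c,v)\<leftarrow>zip cs' vs. \<bar>c\<bar> * enorm v)"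
      using Cons.IH[of cs'] Cons.prems by (simp add: enorm_smult)
    finally show ?thesis using Cons by simp
  qed
qed

lemma span_zero: "0\<^sub>v d \<in> lin_span d S"
  unfolding lin_span_def by (rule CollectI, rule exI[of _ "[]"], rule exI[of _ "[]"]) simp

lemma span_elem: "v \<in> S \<Longrightarrow> v \<in> carrier_vec d \<Longrightarrow> v \<in> lin_span d S"
  unfolding lin_span_def
  by (rule CollectI, rule exI[of _ "[1]"], rule exI[of _ "[v]"]) simp

lemma span_carrier: "S \<subseteq> carrier_vec d \<Longrightarrow> w \<in> lin_span d S \<Longrightarrow> w \<in> carrier_vec d"
  unfolding lin_span_def by auto

lemma span_add: assumes "S \<subseteq> carrier_vec d" "x \<in> lin_span d S" "y \<in> lin_span d S"
  shows "x + y \<in> lin_span d S"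
proof -
  obtain cs vs where x: "x = lin_comb d cs vs" "set vs \<subseteq> S" "length cs = length vs"
    using assms(2) unfolding lin_span_def by auto
  obtain cs' vs' where y: "y = lin_comb d cs' vs'" "set vs' \<subseteq> S" "length cs' = length vs'"
    using assms(3) unfolding lin_span_def by auto
  have "x + y = lin_comb d (cs@cs') (vs@vs')"
    using x y assms(1) by (subst lin_comb_append) auto
  thus ?thesis unfolding lin_span_def using x y
    by (intro CollectI exI[of _ "cs@cs'"] exI[of _ "vs@vs'"]) auto
qed

lemma span_smult: assumes "S \<subseteq> carrier_vec d" "x \<in> lin_span d S"
  shows "a \<cdot>\<^sub>v x \<in> lin_span d S"
proof -
  obtain cs vs where x: "x = lin_comb d cs vs" "set vs \<subseteq> S" "length cs = length vs"
    using assms(2) unfolding lin_span_def by auto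
  have "a \<cdot>\<^sub>v x = lin_comb d (map ((*) a) cs) vs"
    using x assms(1) lin_comb_smult[of vs d a cs] by auto
  thus ?thesis unfolding lin_span_def using x
    by (intro CollectI exI[of _ "map ((*) a) cs"] exI[of _ vs]) auto
qed

lemma span_minus: assumes "S \<subseteq> carrier_vec d" "x \<in> lin_span d S" "y \<in> lin_span d S"
  shows "x - y \<in> lin_span d S"
proof -
  have "x - y = x + (-1) \<cdot>\<^sub>v y"
    using span_carrier[OF assms(1)] assms by (intro eq_vecI) auto
  thus ?thesis using span_add[OF assms(1,2) span_smult[OF assms(1,3)]] by simp
qed

lemma span_mono: "S \<subseteq> T \<Longrightarrow> lin_span d S \<subseteq> lin_span d T"
  unfolding lin_span_def by blast

lemma span_orth: assumes "S \<subseteq> carrier_vec d" "y \<in> carrier_vec d" "\<forall>v\<in>S. v \<bullet> y = 0"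
  "w \<in> lin_span d S" shows "w \<bullet> y = 0"
proof -
  obtain cs vs where x: "w = lin_comb d cs vs" "set vs \<subseteq> S"
    using assms(4) unfolding lin_span_def by auto
  have "\<forall>p \<in> set (zip cs vs). (case p of (c,v) \<Rightarrow> c * (v \<bullet> y)) = 0"
    using x(2) assms(3) by (auto dest: set_zip_rightD)
  then have "(\<Sum>(c,v)\<leftarrow>zip cs vs. c * (v \<bullet> y)) = 0"
    by (metis (no_types, lifting) map_eq_conv sum_list_0)
  thus ?thesis using x assms by (simp add: lin_comb_sp)
qed

fun resr :: "real vec list \<Rightarrow> real vec \<Rightarrow> real vec" where
  "resr [] x = x"
| "resr (c#cs) x = (let u = resr cs c; y = resr cs x in
      if u \<bullet> u = 0 then y else y - ((y \<bullet> u) / (u \<bullet> u)) \<cdot>\<^sub>v u)"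

definition res :: "real vec list \<Rightarrow> real vec \<Rightarrow> real vec" where
  "res cs x = resr (rev cs) x"

lemma res_Nil[simp]: "res [] x = x" unfolding res_def by simp

lemma res_snoc: "res (cs @ [c]) x = (let u = res cs c; y = res cs x in
      if u \<bullet> u = 0 then y else y - ((y \<bullet> u) / (u \<bullet> u)) \<cdot>\<^sub>v u)"
  unfolding res_def by simp

lemma res_carrier[simp]: "set cs \<subseteq> carrier_vec d \<Longrightarrow> x \<in> carrier_vec d \<Longrightarrow> res cs x \<in> carrier_vec d"
proof (induction cs arbitrary: x rule: rev_induct)
  case Nil then show ?case by simp
next
  case (snoc c cs) then show ?case by (simp add: res_snoc Let_def)
qed

lemma res_add: "set cs \<subseteq> carrier_vec d \<Longrightarrow> x \<in> carrier_vec d \<Longrightarrow> y \<in> carrier_vec d \<Longrightarrow>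
   res cs (x + y) = res cs x + res cs y"
proof (induction cs arbitrary: x y rule: rev_induct)
  case Nil then show ?case by simp
next
  case (snoc c cs)
  let ?u = "res cs c"
  have c: "c \<in> carrier_vec d" "set cs \<subseteq> carrier_vec d" using snoc by auto
  have IH: "res cs (x + y) = res cs x + res cs y" using snoc c by auto
  have u: "?u \<in> carrier_vec d" using c by simp
  have a: "res cs x \<in> carrier_vec d" "res cs y \<in> carrier_vec d" using c snoc by auto
  show ?case
  proof (cases "?u \<bullet> ?u = 0")
    case True then show ?thesis by (simp add: res_snoc IH)
  next
    case False
    have sp: "(res cs x + res cs y) \<bullet> ?u = res cs x \<bullet> ?u + res cs y \<bullet> ?u"
      using a u by (rule add_scalar_prod_distrib)
    show ?thesis using False a u unfolding res_snoc Let_def IH sp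
      by (intro eq_vecI) (auto simp: add_divide_distrib algebra_simps)
  qed
qed

lemma res_smult: "set cs \<subseteq> carrier_vec d \<Longrightarrow> x \<in> carrier_vec d \<Longrightarrow>
   res cs (a \<cdot>\<^sub>v x) = a \<cdot>\<^sub>v res cs x"
proof (induction cs arbitrary: x rule: rev_induct)
  case Nil then show ?case by simp
next
  case (snoc c cs)
  let ?u = "res cs c"
  have c: "c \<in> carrier_vec d" "set cs \<subseteq> carrier_vec d" using snoc by auto
  have IH: "res cs (a \<cdot>\<^sub>v x) = a \<cdot>\<^sub>v res cs x" using snoc c by auto
  have u: "?u \<in> carrier_vec d" using c by simp
  have a: "res cs x \<in> carrier_vec d" using c snoc by auto
  show ?case
  proof (cases "?u \<bullet> ?u = 0")
    case True then show ?thesis by (simp add: res_snoc IH)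
  next
    case False
    show ?thesis using False a u unfolding res_snoc Let_def IH
      by (intro eq_vecI) (auto simp: algebra_simps)
  qed
qed

lemma res_main: "set cs \<subseteq> carrier_vec d \<Longrightarrow> x \<in> carrier_vec d \<Longrightarrow>
   (\<forall>v\<in>set cs. v \<bullet> res cs x = 0) \<and> x - res cs x \<in> lin_span d (set cs)"
proof (induction cs arbitrary: x rule: rev_induct)
  case Nil then show ?case using span_zero[of d "{}"] by simp
next
  case (snoc c cs)
  let ?u = "res cs c" and ?y = "res cs x"
  have c: "c \<in> carrier_vec d" "set cs \<subseteq> carrier_vec d" using snoc by auto
  have S: "set (cs @ [c]) \<subseteq> carrier_vec d" using snoc by auto
  have u: "?u \<in> carrier_vec d" using c by simp
  have y: "?y \<in> carrier_vec d" using c snoc by auto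
  have IHx: "\<forall>v\<in>set cs. v \<bullet> ?y = 0" "x - ?y \<in> lin_span d (set cs)" using snoc.IH[OF c(2) snoc.prems(2)] by auto
  have IHc: "\<forall>v\<in>set cs. v \<bullet> ?u = 0" "c - ?u \<in> lin_span d (set cs)" using snoc.IH[OF c(2) c(1)] by auto
  have mono: "lin_span d (set cs) \<subseteq> lin_span d (set (cs @ [c]))" by (rule span_mono) auto
  have orthspan: "w \<bullet> z = 0" if "w \<in> lin_span d (set cs)" "z \<in> carrier_vec d" "\<forall>v\<in>set cs. v \<bullet> z = 0" for w z
    using span_orth[OF c(2) that(2)] that by auto
  show ?case
  proof (cases "?u \<bullet> ?u = 0")
    case True
    then have u0: "?u = 0\<^sub>v d" using sp_eq0[OF u] by simp
    then have "c \<in> lin_span d (set cs)" using IHc(2) c by simp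
    then have "c \<bullet> ?y = 0" using orthspan[OF _ y IHx(1)] by simp
    then show ?thesis using True IHx mono by (auto simp: res_snoc)
  next
    case False
    define t where "t = (?y \<bullet> ?u) / (?u \<bullet> ?u)"
    have r: "res (cs @ [c]) x = ?y - t \<cdot>\<^sub>v ?u" using False unfolding res_snoc Let_def t_def by simp
    have r1: "v \<bullet> (?y - t \<cdot>\<^sub>v ?u) = 0" if "v \<in> set cs" for v
    proof -
      have "v \<in> carrier_vec d" using that c by auto
      then have "v \<bullet> (?y - t \<cdot>\<^sub>v ?u) = v \<bullet> ?y - t * (v \<bullet> ?u)"
        using y u by (simp add: scalar_prod_minus_distrib[of _ d])
      thus ?thesis using IHx IHc that by simp
    qed
    have r2: "?u \<bullet> (?y - t \<cdot>\<^sub>v ?u) = 0"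
    proof -
      have "?u \<bullet> (?y - t \<cdot>\<^sub>v ?u) = ?u \<bullet> ?y - t * (?u \<bullet> ?u)"
        using y u by (simp add: scalar_prod_minus_distrib[of _ d])
      thus ?thesis using False comm_scalar_prod[OF u y] unfolding t_def by simp
    qed
    have r3: "(c - ?u) \<bullet> (?y - t \<cdot>\<^sub>v ?u) = 0"
      using orthspan[OF IHc(2) _ ] r1 y u by auto
    have "c \<bullet> (?y - t \<cdot>\<^sub>v ?u) = (c - ?u) \<bullet> (?y - t \<cdot>\<^sub>v ?u) + ?u \<bullet> (?y - t \<cdot>\<^sub>v ?u)"
      using c u y by (simp add: minus_scalar_prod_distrib[of _ d])
    then have r4: "c \<bullet> (?y - t \<cdot>\<^sub>v ?u) = 0" using r2 r3 by simp
    have uspan: "?u \<in> lin_span d (set (cs @ [c]))"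
    proof -
      have e: "c - (c - ?u) = ?u" using c u by (intro eq_vecI) auto
      have cs: "c \<in> lin_span d (set (cs @ [c]))" using c by (intro span_elem) auto
      have "c - ?u \<in> lin_span d (set (cs @ [c]))" using IHc(2) mono by blast
      then have "c - (c - ?u) \<in> lin_span d (set (cs @ [c]))" using span_minus[OF S cs] by blast
      then show ?thesis unfolding e .
    qed
    have "x - (?y - t \<cdot>\<^sub>v ?u) = (x - ?y) + t \<cdot>\<^sub>v ?u" using snoc.prems(2) y u by (intro eq_vecI) auto
    then have "x - (?y - t \<cdot>\<^sub>v ?u) \<in> lin_span d (set (cs @ [c]))"
      using span_add[OF S _ span_smult[OF S uspan]] IHx(2) mono by auto
    then show ?thesis unfolding r using r1 r4 by auto
  qed
qed

lemma res_orth: "set cs \<subseteq> carrier_vec d \<Longrightarrow> x \<in> carrier_vec d \<Longrightarrow> w \<in> lin_span d (set cs) \<Longrightarrow>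
   w \<bullet> res cs x = 0"
  using span_orth[of "set cs" d "res cs x" w] res_main[of cs d x] by auto

lemma res_diff: "set cs \<subseteq> carrier_vec d \<Longrightarrow> x \<in> carrier_vec d \<Longrightarrow> x - res cs x \<in> lin_span d (set cs)"
  using res_main by blast

lemma res_min: assumes S: "set cs \<subseteq> carrier_vec d" and x: "x \<in> carrier_vec d"
  and w: "w \<in> lin_span d (set cs)"
  shows "enorm (res cs x) \<le> enorm (x - w)"
proof -
  let ?r = "res cs x"
  have r: "?r \<in> carrier_vec d" using S x by simp
  have wc: "w \<in> carrier_vec d" using span_carrier[OF S w] .
  define v where "v = (x - ?r) - w"
  have vs: "v \<in> lin_span d (set cs)" unfolding v_def using span_minus[OF S res_diff[OF S x] w] .
  have vc: "v \<in> carrier_vec d" using span_carrier[OF S vs] .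
  have eq: "x - w = ?r + v" unfolding v_def using x r wc by (intro eq_vecI) auto
  have o: "v \<bullet> ?r = 0" using res_orth[OF S x vs] .
  have "(enorm (x - w))^2 = ?r \<bullet> ?r + v \<bullet> v"
    unfolding eq enorm_sq using r vc o comm_scalar_prod[OF r vc]
    by (simp add: add_scalar_prod_distrib[of _ d] scalar_prod_add_distrib[of _ d])
  then have "(enorm ?r)^2 \<le> (enorm (x - w))^2" using sp_ge0[of v] by (simp add: enorm_sq)
  then show ?thesis by (rule power2_le_imp_le) (simp add: enorm_ge0)
qed

lemma dist_span_res: assumes S: "set cs \<subseteq> carrier_vec d" and x: "x \<in> carrier_vec d"
  shows "dist_span d x (set cs) = enorm (res cs x)"
  unfolding dist_span_def
proof (rule cInf_eq_minimum)
  have "x - (x - res cs x) = res cs x" using S x by (intro eq_vecI) auto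
  then show "enorm (res cs x) \<in> {enorm (x - w) |w. w \<in> lin_span d (set cs)}"
    using res_diff[OF S x] by (metis (mono_tags, lifting) mem_Collect_eq)
next
  fix y assume "y \<in> {enorm (x - w) |w. w \<in> lin_span d (set cs)}"
  then show "enorm (res cs x) \<le> y" using res_min[OF S x] by auto
qed

lemma minus_zero_smult: "x \<in> carrier_vec d \<Longrightarrow> u \<in> carrier_vec d \<Longrightarrow> x - (0::real) \<cdot>\<^sub>v u = x"
  by (intro eq_vecI) auto

lemma res_fix: "set cs \<subseteq> carrier_vec d \<Longrightarrow> x \<in> carrier_vec d \<Longrightarrow> \<forall>v\<in>set cs. v \<bullet> x = 0 \<Longrightarrow> res cs x = x"
proof (induction cs rule: rev_induct)
  case Nil then show ?case by simp
next
  case (snoc c cs)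
  have c: "c \<in> carrier_vec d" "set cs \<subseteq> carrier_vec d" using snoc by auto
  have IH: "res cs x = x" using snoc c by auto
  have u: "res cs c \<in> carrier_vec d" using c by simp
  have "c - res cs c \<in> lin_span d (set cs)" using res_diff c by blast
  then have "(c - res cs c) \<bullet> x = 0" using span_orth[OF c(2) snoc.prems(2)] snoc.prems by auto
  then have "c \<bullet> x - res cs c \<bullet> x = 0" using c u snoc.prems by (simp add: minus_scalar_prod_distrib[of _ d])
  then have "x \<bullet> res cs c = 0" using snoc.prems comm_scalar_prod[OF u snoc.prems(2)] by simp
  then show ?case using minus_zero_smult[OF snoc.prems(2) u] by (simp add: res_snoc IH Let_def)
qed

lemma res_mem: assumes S: "set cs \<subseteq> carrier_vec d" and x: "x \<in> set cs"
  shows "res cs x = 0\<^sub>v d"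
proof -
  have xc: "x \<in> carrier_vec d" using S x by auto
  have "enorm (res cs x) \<le> enorm (x - x)" using res_min[OF S xc span_elem[OF x xc]] .
  also have "x - x = 0\<^sub>v d" using xc by (intro eq_vecI) auto
  finally have "enorm (res cs x) \<le> 0" by (simp add: enorm_def)
  then have "res cs x \<bullet> res cs x = 0" using enorm_ge0[of "res cs x"] enorm_sq[of "res cs x"] by simp
  then show ?thesis using sp_eq0 res_carrier[OF S xc] by blast
qed

lemma res_mono: assumes S: "set (cs @ [c]) \<subseteq> carrier_vec d" and x: "x \<in> carrier_vec d"
  shows "enorm (res (cs @ [c]) x) \<le> enorm (res cs x)"
proof -
  have S': "set cs \<subseteq> carrier_vec d" using S by auto
  have rc: "res cs x \<in> carrier_vec d" using S' x by simp
  have w: "x - res cs x \<in> lin_span d (set (cs @ [c]))"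
    using res_diff[OF S' x] span_mono[of "set cs" "set (cs @ [c])"] by auto
  have e: "x - (x - res cs x) = res cs x" using rc x by (intro eq_vecI) auto
  show ?thesis using res_min[OF S x w] unfolding e .
qed

lemma res_step: assumes S: "set (cs @ [c]) \<subseteq> carrier_vec d" and x: "x \<in> carrier_vec d"
  and le: "enorm (res cs x) \<le> enorm (res cs c)"
  shows "\<exists>t. \<bar>t\<bar> \<le> 1 \<and> res (cs @ [c]) x = res cs x - t \<cdot>\<^sub>v res cs c"
proof -
  let ?u = "res cs c" and ?y = "res cs x"
  have S': "set cs \<subseteq> carrier_vec d" "c \<in> carrier_vec d" using S by auto
  have uc: "?u \<in> carrier_vec d" using S' by simp
  have yc: "?y \<in> carrier_vec d" using S' x by simp
  show ?thesis
  proof (cases "?u \<bullet> ?u = 0")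
    case True
    have e: "?y - 0 \<cdot>\<^sub>v ?u = ?y" using minus_zero_smult[OF yc uc] .
    have "res (cs @ [c]) x = ?y" using True unfolding res_snoc Let_def by simp
    then show ?thesis using e by (intro exI[of _ 0]) simp
  next
    case False
    have "\<bar>?y \<bullet> ?u\<bar> \<le> enorm ?y * enorm ?u" using abs_sp_le[OF yc uc] .
    also have "\<dots> \<le> enorm ?u * enorm ?u" using le enorm_ge0[of ?u] by (rule mult_right_mono)
    also have "\<dots> = ?u \<bullet> ?u" using enorm_sq[of ?u] by (simp add: power2_eq_square)
    finally have le1: "\<bar>?y \<bullet> ?u\<bar> \<le> ?u \<bullet> ?u" .
    have pos: "?u \<bullet> ?u > 0" using False sp_ge0[of ?u] by linarith
    have t: "\<bar>(?y \<bullet> ?u) / (?u \<bullet> ?u)\<bar> \<le> 1" unfolding abs_divide abs_of_pos[OF pos] divide_le_eq_1_pos[OF pos] by (rule le1)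
    have "res (cs @ [c]) x = ?y - ((?y \<bullet> ?u) / (?u \<bullet> ?u)) \<cdot>\<^sub>v ?u"
      using False unfolding res_snoc Let_def by simp
    then show ?thesis using t by blast
  qed
qed

lemma dim_lin_comb[simp]: "set vs \<subseteq> carrier_vec d \<Longrightarrow> dim_vec (lin_comb d cs vs) = d"
  by (rule carrier_vecD[OF lin_comb_carrier])

definition del :: "nat \<Rightarrow> 'a list \<Rightarrow> 'a list" where
  "del j S = take j S @ drop (Suc j) S"

lemma del_length[simp]: "j < length S \<Longrightarrow> length (del j S) = length S - 1"
  unfolding del_def by simp

lemma del_nth: "j < length S \<Longrightarrow> i < length S - 1 \<Longrightarrow>
   del j S ! i = S ! (if i < j then i else Suc i)"
  unfolding del_def by (auto simp: nth_append min_def)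

lemma set_del: "set (del j S) \<subseteq> set S"
  unfolding del_def by (auto dest: in_set_takeD in_set_dropD)

lemma set_del_iff: assumes "j < length S" "v \<in> set (del j S)"
  shows "\<exists>i<length S. i \<noteq> j \<and> S ! i = v"
proof -
  from assms(2) obtain i where i: "i < length (del j S)" "del j S ! i = v" by (auto simp: in_set_conv_nth)
  show ?thesis using i assms(1) del_nth[OF assms(1), of i]
    by (intro exI[of _ "if i < j then i else Suc i"]) auto
qed

lemma gram_mat: assumes "set vs \<subseteq> carrier_vec d"
  shows "mat_of_rows d vs * transpose_mat (mat_of_rows d vs) =
         mat (length vs) (length vs) (\<lambda>(i,j). vs ! i \<bullet> vs ! j)"
  using assms by (intro eq_matI) (auto simp: nth_mem subset_iff)

lemma gram_det_alt: "set vs \<subseteq> carrier_vec d \<Longrightarrow>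
   gram_det d vs = det (mat (length vs) (length vs) (\<lambda>(i,j). vs ! i \<bullet> vs ! j))"
  unfolding gram_det_def by (simp add: gram_mat)

lemma gram_det_addrow:
  assumes S: "set S \<subseteq> carrier_vec d" and ij: "i < length S" "j < length S" "i \<noteq> j"
    and y: "y \<in> carrier_vec d"
  shows "gram_det d (S[j := y + c \<cdot>\<^sub>v S ! i]) = gram_det d (S[j := y])"
proof -
  let ?n = "length S"
  define M where "M = mat_of_rows d (S[j := y])"
  define E where "E = (addrow_mat ?n c j i :: real mat)"
  have Mc: "M \<in> carrier_mat ?n d" unfolding M_def by (metis length_list_update mat_of_rows_carrier(1))
  have Ec: "E \<in> carrier_mat ?n ?n" unfolding E_def by simp
  have Si: "S ! i \<in> carrier_vec d" using S ij by auto
  have "mat_of_rows d (S[j := y + c \<cdot>\<^sub>v S ! i]) = addrow c j i M"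
    unfolding M_def using ij y Si
    by (intro eq_matI) (auto simp: mat_of_rows_index nth_list_update)
  also have "\<dots> = E * M" unfolding E_def using addrow_mat[OF Mc ij(1)] .
  finally have eq: "mat_of_rows d (S[j := y + c \<cdot>\<^sub>v S ! i]) = E * M" .
  have "gram_det d (S[j := y + c \<cdot>\<^sub>v S ! i]) = det ((E * M) * transpose_mat (E * M))"
    unfolding gram_det_def eq ..
  also have "(E * M) * transpose_mat (E * M) = E * (M * transpose_mat M) * transpose_mat E"
  proof -
    have c1: "transpose_mat M \<in> carrier_mat d ?n" "transpose_mat E \<in> carrier_mat ?n ?n" using Mc Ec by auto
    have "(E * M) * transpose_mat (E * M) = E * M * (transpose_mat M * transpose_mat E)"
      by (simp add: transpose_mult[OF Ec Mc])
    also have "\<dots> = E * (M * (transpose_mat M * transpose_mat E))"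
      by (rule assoc_mult_mat[OF Ec Mc]) (use c1 in auto)
    also have "M * (transpose_mat M * transpose_mat E) = M * transpose_mat M * transpose_mat E"
      by (rule assoc_mult_mat[symmetric, OF Mc c1])
    also have "E * (M * transpose_mat M * transpose_mat E) = E * (M * transpose_mat M) * transpose_mat E"
      by (rule assoc_mult_mat[symmetric, OF Ec _ c1(2)]) (use Mc c1 in auto)
    finally show ?thesis .
  qed
  also have "det \<dots> = det E * det (M * transpose_mat M) * det (transpose_mat E)"
    using Ec Mc by (simp add: det_mult[of _ ?n])
  also have "\<dots> = det (M * transpose_mat M)"
    using det_transpose[OF Ec] det_addrow_mat[of j i ?n c] ij unfolding E_def by simp
  finally show ?thesis unfolding gram_det_def M_def .
qed

lemma gram_det_addspan:
  assumes S: "set S \<subseteq> carrier_vec d" and j: "j < length S"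
    and y: "y \<in> carrier_vec d" and w: "w \<in> lin_span d (set (del j S))"
  shows "gram_det d (S[j := y + w]) = gram_det d (S[j := y])"
proof -
  obtain cs vs where w: "w = lin_comb d cs vs" "set vs \<subseteq> set (del j S)"
    using w unfolding lin_span_def by auto
  have vsc: "set vs \<subseteq> carrier_vec d" using w(2) set_del[of j S] S by auto
  have "\<forall>y cs. y \<in> carrier_vec d \<longrightarrow> gram_det d (S[j := y + lin_comb d cs vs]) = gram_det d (S[j := y])"
    using w(2) vsc
  proof (induction vs)
    case Nil then show ?case by (auto intro!: arg_cong[of _ _ "\<lambda>v. gram_det d (S[j := v])"])
  next
    case (Cons v vs)
    show ?case
    proof (intro allI impI)
      fix y cs assume y: "(y::real vec) \<in> carrier_vec d"
      show "gram_det d (S[j := y + lin_comb d cs (v # vs)]) = gram_det d (S[j := y])"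
      proof (cases cs)
        case Nil then show ?thesis using y by (simp)
      next
        case (Cons c cs')
        obtain i where i: "i < length S" "i \<noteq> j" "S ! i = v" using set_del_iff[OF j] Cons.prems by auto
        have vc: "v \<in> carrier_vec d" "set vs \<subseteq> carrier_vec d" using Cons.prems by auto
        have lc: "lin_comb d cs' vs \<in> carrier_vec d" using vc by simp
        have "y + lin_comb d cs (v # vs) = (y + lin_comb d cs' vs) + c \<cdot>\<^sub>v S ! i"
          using Cons i y vc lc by (intro eq_vecI) auto
        then have "gram_det d (S[j := y + lin_comb d cs (v # vs)]) = gram_det d (S[j := y + lin_comb d cs' vs])"
          using gram_det_addrow[OF S i(1) j i(2), of "y + lin_comb d cs' vs" c] y lc by simp
        also have "\<dots> = gram_det d (S[j := y])" using Cons.IH Cons.prems y by auto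
        finally show ?thesis .
      qed
    qed
  qed
  then show ?thesis using y w(1) by auto
qed

lemma del_mem: "l < length S \<Longrightarrow> l \<noteq> j \<Longrightarrow> S ! l \<in> set (del j S)"
proof -
  assume l: "l < length S" "l \<noteq> j"
  show ?thesis
  proof (cases "l < j")
    case True
    then have "S ! l = take j S ! l" by simp
    moreover have "l < length (take j S)" using True l by simp
    ultimately show ?thesis unfolding del_def by (metis UnCI nth_mem set_append)
  next
    case False
    then have "S ! l = drop (Suc j) S ! (l - Suc j)" using l by simp
    moreover have "l - Suc j < length (drop (Suc j) S)" using False l by simp
    ultimately show ?thesis unfolding del_def by (metis UnCI nth_mem set_append)
  qed
qed

lemma gram_det_orth:
  assumes S: "set S \<subseteq> carrier_vec d" and j: "j < length S" and e: "e \<in> carrier_vec d"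
    and orth: "\<forall>v\<in>set (del j S). v \<bullet> e = 0"
  shows "gram_det d (S[j := e]) = gram_det d (del j S) * (e \<bullet> e)"
proof -
  let ?n = "length S" and ?T = "S[j := e]"
  define A where "A = mat ?n ?n (\<lambda>(a,b). ?T ! a \<bullet> ?T ! b)"
  have T: "set ?T \<subseteq> carrier_vec d" using S e by (meson set_update_subsetI)
  have D: "set (del j S) \<subseteq> carrier_vec d" using S set_del[of j S] by auto
  have Ac: "A \<in> carrier_mat ?n ?n" unfolding A_def by simp
  have G: "gram_det d ?T = det A" unfolding A_def using gram_det_alt[OF T] by simp
  have "det A = (\<Sum>l<?n. A $$ (j,l) * cofactor A j l)" by (rule laplace_expansion_row[OF Ac j])
  also have "\<dots> = A $$ (j,j) * cofactor A j j"
  proof (rule sum.mono_neutral_right[of "{..<?n}" "{j}", simplified], goal_cases)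
    case 1 show ?case using j by simp
  next
    case 2 show ?case
    proof
      fix l assume l: "l \<in> {..<?n} - {j}"
      then have lS: "S ! l \<in> set (del j S)" using del_mem by auto
      have Sl: "S ! l \<in> carrier_vec d" using lS D by auto
      have "A $$ (j,l) = e \<bullet> S ! l" unfolding A_def using l j by auto
      also have "\<dots> = 0" using orth lS comm_scalar_prod[OF e Sl] by auto
      finally show "A $$ (j,l) * cofactor A j l = 0" by simp
    qed
  qed
  also have "A $$ (j,j) = e \<bullet> e" unfolding A_def using j by simp
  also have "cofactor A j j = det (mat_delete A j j)" unfolding cofactor_def
    by (simp add: mult_2[symmetric])
  also have "mat_delete A j j = mat (?n - 1) (?n - 1) (\<lambda>(a,b). del j S ! a \<bullet> del j S ! b)"
    unfolding mat_delete_def A_def using j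
    by (intro eq_matI) (auto simp: del_nth nth_list_update)
  also have "det \<dots> = gram_det d (del j S)"
    using gram_det_alt[OF D] j by simp
  finally show ?thesis using G by simp
qed

lemma gram_det_res:
  assumes S: "set S \<subseteq> carrier_vec d" and j: "j < length S" and x: "x \<in> carrier_vec d"
  shows "gram_det d (S[j := x]) = gram_det d (del j S) * (enorm (res (del j S) x))^2"
proof -
  let ?R = "del j S"
  have D: "set ?R \<subseteq> carrier_vec d" using S set_del[of j S] by auto
  have rc: "res ?R x \<in> carrier_vec d" using D x by simp
  have w: "x - res ?R x \<in> lin_span d (set ?R)" using res_diff[OF D x] .
  have e: "res ?R x + (x - res ?R x) = x" using rc x by (intro eq_vecI) auto
  have "gram_det d (S[j := x]) = gram_det d (S[j := res ?R x + (x - res ?R x)])" using e by simp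
  also have "\<dots> = gram_det d (S[j := res ?R x])" by (rule gram_det_addspan[OF S j rc w])
  also have "\<dots> = gram_det d ?R * (res ?R x \<bullet> res ?R x)"
    by (rule gram_det_orth[OF S j rc]) (use res_main[OF D x] in auto)
  finally show ?thesis by (simp add: enorm_sq)
qed

lemma gram_det_Nil: "gram_det d [] = 1"
  unfolding gram_det_def det_def by simp

lemma gram_det_nonneg: "set S \<subseteq> carrier_vec d \<Longrightarrow> gram_det d S \<ge> 0"
proof (induction S rule: rev_induct)
  case Nil then show ?case by (simp add: gram_det_Nil)
next
  case (snoc x S)
  let ?n = "length S"
  have j: "?n < length (S @ [x])" by simp
  have x: "x \<in> carrier_vec d" using snoc by auto
  have e1: "(S @ [x])[?n := x] = S @ [x]" by simp
  have e2: "del ?n (S @ [x]) = S" unfolding del_def by simp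
  have "gram_det d (S @ [x]) = gram_det d S * (enorm (res S x))^2"
    using gram_det_res[OF snoc.prems j x] unfolding e1 e2 .
  then show ?case using snoc by simp
qed

lemma gram_det_pos_distinct: assumes S: "set S \<subseteq> carrier_vec d" and pos: "gram_det d S > 0"
  shows "distinct S"
proof (rule ccontr)
  assume "\<not> distinct S"
  then obtain i j where ij: "i < length S" "j < length S" "i \<noteq> j" "S ! i = S ! j"
    by (auto simp: distinct_conv_nth)
  have x: "S ! j \<in> carrier_vec d" using S ij by auto
  have D: "set (del j S) \<subseteq> carrier_vec d" using S set_del[of j S] by auto
  have mem: "S ! j \<in> set (del j S)" using del_mem[OF ij(1) ij(3)] ij(4) by simp
  have "gram_det d S = gram_det d (S[j := S ! j])" by simp
  also have "\<dots> = gram_det d (del j S) * (enorm (res (del j S) (S ! j)))^2"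
    by (rule gram_det_res[OF S ij(2) x])
  also have "res (del j S) (S ! j) = 0\<^sub>v d" by (rule res_mem[OF D mem])
  finally have "gram_det d S = 0" by (simp add: enorm_def)
  then show False using pos by simp
qed

lemma lin_comb_sp_idx: "length cs = length vs \<Longrightarrow> set vs \<subseteq> carrier_vec d \<Longrightarrow> y \<in> carrier_vec d \<Longrightarrow>
   lin_comb d cs vs \<bullet> y = (\<Sum>j<length vs. cs ! j * (vs ! j \<bullet> y))"
proof (induction vs arbitrary: cs)
  case Nil then show ?case by simp
next
  case (Cons v vs)
  then obtain c cs' where cs: "cs = c # cs'" by (cases cs) auto
  have "lin_comb d cs (v # vs) \<bullet> y = c * (v \<bullet> y) + lin_comb d cs' vs \<bullet> y"
    using Cons.prems cs by (simp add: add_scalar_prod_distrib[of _ d])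
  also have "lin_comb d cs' vs \<bullet> y = (\<Sum>j<length vs. cs' ! j * (vs ! j \<bullet> y))"
    using Cons cs by simp
  finally show ?case using cs by (simp add: sum.lessThan_Suc_shift del: sum.lessThan_Suc)
qed

lemma lin_comb_norm_idx: "length cs = length vs \<Longrightarrow> set vs \<subseteq> carrier_vec d \<Longrightarrow>
   enorm (lin_comb d cs vs) \<le> (\<Sum>j<length vs. \<bar>cs ! j\<bar> * enorm (vs ! j))"
proof (induction vs arbitrary: cs)
  case Nil then show ?case by (simp add: enorm_def)
next
  case (Cons v vs)
  then obtain c cs' where cs: "cs = c # cs'" by (cases cs) auto
  have "enorm (lin_comb d cs (v # vs)) \<le> enorm (c \<cdot>\<^sub>v v) + enorm (lin_comb d cs' vs)"
    using Cons.prems cs by (auto intro!: enorm_triangle[of _ d])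
  also have "enorm (lin_comb d cs' vs) \<le> (\<Sum>j<length vs. \<bar>cs' ! j\<bar> * enorm (vs ! j))"
    using Cons cs by simp
  finally show ?case using cs by (simp add: sum.lessThan_Suc_shift enorm_smult del: sum.lessThan_Suc)
qed

lemma res_lin_comb: "length cs = length vs \<Longrightarrow> set vs \<subseteq> carrier_vec d \<Longrightarrow> set R \<subseteq> carrier_vec d \<Longrightarrow>
   res R (lin_comb d cs vs) = lin_comb d cs (map (res R) vs)"
proof (induction vs arbitrary: cs)
  case Nil
  have z0: "0 \<cdot>\<^sub>v 0\<^sub>v d = (0\<^sub>v d :: real vec)" by (intro eq_vecI) auto
  have "res R (0\<^sub>v d) = res R (0 \<cdot>\<^sub>v 0\<^sub>v d)" unfolding z0 ..
  also have "\<dots> = 0 \<cdot>\<^sub>v res R (0\<^sub>v d)" using Nil by (intro res_smult) auto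
  also have "\<dots> = 0\<^sub>v d"
  proof -
    have rc: "res R (0\<^sub>v d) \<in> carrier_vec d" using res_carrier[OF Nil(3), of "0\<^sub>v d"] by simp
    show ?thesis by (rule eq_vecI) (use rc in auto)
  qed
  finally show ?case using Nil by simp
next
  case (Cons v vs)
  then obtain c cs' where cs: "cs = c # cs'" by (cases cs) auto
  have vc: "v \<in> carrier_vec d" "set vs \<subseteq> carrier_vec d" using Cons by auto
  have "res R (lin_comb d cs (v # vs)) = res R (c \<cdot>\<^sub>v v) + res R (lin_comb d cs' vs)"
    using cs vc Cons.prems by (simp add: res_add)
  also have "\<dots> = c \<cdot>\<^sub>v res R v + lin_comb d cs' (map (res R) vs)"
    using Cons cs vc by (simp add: res_smult)
  finally show ?case using cs by simp
qed

lemma z_lemma: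
  assumes U: "set U \<subseteq> carrier_vec d" and R: "set R \<subseteq> carrier_vec d"
    and len: "length R < length U"
    and orth: "\<And>i j. i < length U \<Longrightarrow> j < length U \<Longrightarrow> i \<noteq> j \<Longrightarrow> U ! i \<bullet> U ! j = 0"
    and big: "\<And>j. j < length U \<Longrightarrow> r \<le> enorm (U ! j)"
  shows "r \<le> (\<Sum>j<length U. enorm (res R (U ! j)))"
proof (cases "r \<le> 0")
  case True
  then show ?thesis using sum_nonneg[of "{..<length U}" "\<lambda>j. enorm (res R (U ! j))"] enorm_ge0 by force
next
  case False
  then have r: "r > 0" by simp
  let ?n = "length U"
  define B where "B = mat ?n ?n (\<lambda>(i,j). if i < length R then R ! i \<bullet> U ! j else (0::real))"
  have Bc: "B \<in> carrier_mat ?n ?n" unfolding B_def by simp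
  have n1: "?n - 1 < ?n" using len by simp
  have "det B = (\<Sum>l<?n. B $$ (?n - 1, l) * cofactor B (?n - 1) l)" by (rule laplace_expansion_row[OF Bc n1])
  also have "\<dots> = 0" unfolding B_def using len by (intro sum.neutral) auto
  finally have "det B = 0" .
  then obtain \<beta> where \<beta>: "\<beta> \<in> carrier_vec ?n" "\<beta> \<noteq> 0\<^sub>v ?n" "B *\<^sub>v \<beta> = 0\<^sub>v ?n"
    using det_0_iff_vec_prod_zero[OF Bc] by blast
  define cs where "cs = map (\<lambda>j. \<beta> $ j) [0..<?n]"
  have lcs: "length cs = ?n" unfolding cs_def by simp
  have csj: "j < ?n \<Longrightarrow> cs ! j = \<beta> $ j" for j unfolding cs_def by simp
  define z where "z = lin_comb d cs U"
  have zc: "z \<in> carrier_vec d" unfolding z_def using U by simp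
  have zR: "\<forall>v\<in>set R. v \<bullet> z = 0"
  proof
    fix v assume "v \<in> set R"
    then obtain i where i: "i < length R" "R ! i = v" by (auto simp: in_set_conv_nth)
    have vc: "v \<in> carrier_vec d" using i R by auto
    have "z \<bullet> v = (\<Sum>j<?n. \<beta> $ j * (U ! j \<bullet> v))"
      unfolding z_def using lin_comb_sp_idx[OF lcs U vc] csj by simp
    also have "\<dots> = row B i \<bullet> \<beta>"
    proof -
      have rowB: "row B i = vec ?n (\<lambda>j. v \<bullet> U ! j)" unfolding B_def using i len by (intro eq_vecI) auto
      have "row B i \<bullet> \<beta> = (\<Sum>j\<in>{0..<?n}. (v \<bullet> U ! j) * \<beta> $ j)"
        unfolding rowB scalar_prod_def[of "vec ?n (\<lambda>j. v \<bullet> U ! j)" \<beta>] using \<beta>(1) by simp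
      also have "\<dots> = (\<Sum>j<?n. \<beta> $ j * (U ! j \<bullet> v))"
        unfolding atLeast0LessThan
        by (rule sum.cong) (use U vc in \<open>auto simp: comm_scalar_prod[of v d] nth_mem subset_iff\<close>)
      finally show ?thesis by simp
    qed
    also have "\<dots> = (B *\<^sub>v \<beta>) $ i" using i len Bc by simp
    also have "\<dots> = 0" using \<beta>(3) i len by simp
    finally show "v \<bullet> z = 0" using comm_scalar_prod[OF vc zc] by simp
  qed
  have fz: "res R z = z" by (rule res_fix[OF R zc zR])
  have zUl: "z \<bullet> U ! l = \<beta> $ l * (U ! l \<bullet> U ! l)" if l: "l < ?n" for l
  proof -
    have Ul: "U ! l \<in> carrier_vec d" using U l by auto
    have "z \<bullet> U ! l = (\<Sum>j<?n. \<beta> $ j * (U ! j \<bullet> U ! l))"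
      unfolding z_def using lin_comb_sp_idx[OF lcs U Ul] csj by simp
    also have "\<dots> = (\<Sum>j\<in>{l}. \<beta> $ j * (U ! j \<bullet> U ! l))"
      by (rule sum.mono_neutral_right) (use l orth in auto)
    finally show ?thesis by simp
  qed
  define b where "b = Max ((\<lambda>j. \<bar>\<beta> $ j\<bar>) ` {..<?n})"
  have ne: "{..<?n} \<noteq> {}" using len by auto
  have "b \<in> (\<lambda>j. \<bar>\<beta> $ j\<bar>) ` {..<?n}" unfolding b_def by (rule Max_in) (use ne in auto)
  then obtain l where l: "l < ?n" "\<bar>\<beta> $ l\<bar> = b" by auto
  have bge: "j < ?n \<Longrightarrow> \<bar>\<beta> $ j\<bar> \<le> b" for j unfolding b_def by (rule Max_ge) auto
  have bpos: "b > 0"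
  proof (rule ccontr)
    assume "\<not> b > 0"
    then have "\<forall>j<?n. \<beta> $ j = 0" using bge by force
    then have "\<beta> = 0\<^sub>v ?n" using \<beta>(1) by (intro eq_vecI) auto
    then show False using \<beta>(2) by simp
  qed
  have Ul: "U ! l \<in> carrier_vec d" using U l by auto
  have Ulpos: "enorm (U ! l) > 0" using big[OF l(1)] r by linarith
  have "b * (enorm (U ! l))^2 = \<bar>z \<bullet> U ! l\<bar>"
    using zUl[OF l(1)] l(2) by (simp add: abs_mult enorm_sq sp_ge0)
  also have "\<dots> \<le> enorm z * enorm (U ! l)" by (rule abs_sp_le[OF zc Ul])
  finally have "b * enorm (U ! l) * enorm (U ! l) \<le> enorm z * enorm (U ! l)"
    by (simp add: power2_eq_square mult.assoc)
  then have "b * enorm (U ! l) \<le> enorm z" using Ulpos by simp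
  moreover have "b * r \<le> b * enorm (U ! l)" using big[OF l(1)] bpos by simp
  ultimately have br: "b * r \<le> enorm z" by linarith
  have "enorm z = enorm (lin_comb d cs (map (res R) U))"
    using fz res_lin_comb[OF lcs U R] unfolding z_def by simp
  also have "\<dots> \<le> (\<Sum>j<?n. \<bar>cs ! j\<bar> * enorm (map (res R) U ! j))"
  proof -
    have "set (map (res R) U) \<subseteq> carrier_vec d" using U R by auto
    then show ?thesis using lin_comb_norm_idx[of cs "map (res R) U" d] lcs by simp
  qed
  also have "\<dots> \<le> (\<Sum>j<?n. b * enorm (res R (U ! j)))"
    by (rule sum_mono) (use csj bge enorm_ge0 in \<open>auto intro: mult_right_mono\<close>)
  also have "\<dots> = b * (\<Sum>j<?n. enorm (res R (U ! j)))" by (simp add: sum_distrib_left)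
  finally have "b * r \<le> b * (\<Sum>j<?n. enorm (res R (U ! j)))" using br by linarith
  then show ?thesis using bpos by simp
qed

lemma res_mono_app: assumes S: "set (xs @ ys) \<subseteq> carrier_vec d" and x: "x \<in> carrier_vec d"
  shows "enorm (res (xs @ ys) x) \<le> enorm (res xs x)"
proof -
  have S': "set xs \<subseteq> carrier_vec d" using S by auto
  have rc: "res xs x \<in> carrier_vec d" using S' x by simp
  have w: "x - res xs x \<in> lin_span d (set (xs @ ys))"
    using res_diff[OF S' x] span_mono[of "set xs" "set (xs @ ys)"] by auto
  have e: "x - (x - res xs x) = res xs x" using rc x by (intro eq_vecI) auto
  show ?thesis using res_min[OF S x w] unfolding e .
qed

lemma res_le_norm: assumes R: "set R \<subseteq> carrier_vec d" and x: "x \<in> carrier_vec d"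
  shows "enorm (res R x) \<le> enorm x"
proof -
  have e: "x - 0\<^sub>v d = x" using x by (intro eq_vecI) auto
  show ?thesis using res_min[OF R x span_zero] unfolding e .
qed

lemma f_sub: assumes R: "set R \<subseteq> carrier_vec d" and x: "x \<in> carrier_vec d" and u: "u \<in> carrier_vec d"
  shows "enorm (res R (x - t \<cdot>\<^sub>v u)) \<le> enorm (res R x) + \<bar>t\<bar> * enorm (res R u)"
    and "enorm (res R x) \<le> enorm (res R (x - t \<cdot>\<^sub>v u)) + \<bar>t\<bar> * enorm (res R u)"
proof -
  have e1: "x - t \<cdot>\<^sub>v u = x + (-t) \<cdot>\<^sub>v u" using x u by (intro eq_vecI) auto
  have rx: "res R x \<in> carrier_vec d" "res R u \<in> carrier_vec d" using R x u by auto
  have "res R (x - t \<cdot>\<^sub>v u) = res R x + (-t) \<cdot>\<^sub>v res R u"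
    unfolding e1 using R x u by (simp add: res_add res_smult)
  then show "enorm (res R (x - t \<cdot>\<^sub>v u)) \<le> enorm (res R x) + \<bar>t\<bar> * enorm (res R u)"
    using enorm_triangle[of "res R x" d "(-t) \<cdot>\<^sub>v res R u"] rx by (simp add: enorm_smult)
  have e2: "x = (x - t \<cdot>\<^sub>v u) + t \<cdot>\<^sub>v u" using x u by (intro eq_vecI) auto
  have xc: "x - t \<cdot>\<^sub>v u \<in> carrier_vec d" using x u by simp
  have "res R x = res R (x - t \<cdot>\<^sub>v u) + t \<cdot>\<^sub>v res R u"
    by (subst e2) (use R xc u in \<open>simp add: res_add res_smult\<close>)
  then show "enorm (res R x) \<le> enorm (res R (x - t \<cdot>\<^sub>v u)) + \<bar>t\<bar> * enorm (res R u)"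
    using enorm_triangle[of "res R (x - t \<cdot>\<^sub>v u)" d "t \<cdot>\<^sub>v res R u"] R xc u by (simp add: enorm_smult)
qed

lemma runs_snoc: "cs \<in> greedy_runs d P (Suc n) \<Longrightarrow> \<exists>cs' c. cs = cs' @ [c] \<and> cs' \<in> greedy_runs d P n \<and> c \<in> P \<and>
   (\<forall>q\<in>P. dist_span d q (set cs') \<le> dist_span d c (set cs'))"
  by auto

lemma runs_props: "cs \<in> greedy_runs d P n \<Longrightarrow> length cs = n \<and> set cs \<subseteq> P"
proof (induction n arbitrary: cs)
  case 0 then show ?case by simp
next
  case (Suc n) then show ?case using runs_snoc[OF Suc.prems] by fastforce
qed

lemma runs_greedy: assumes P: "P \<subseteq> carrier_vec d"
  shows "cs \<in> greedy_runs d P n \<Longrightarrow> j < n \<Longrightarrow> q \<in> P \<Longrightarrow>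
    enorm (res (take j cs) q) \<le> enorm (res (take j cs) (cs ! j))"
proof (induction n arbitrary: cs)
  case 0 then show ?case by simp
next
  case (Suc n)
  obtain cs' c where cs: "cs = cs' @ [c]" "cs' \<in> greedy_runs d P n" "c \<in> P"
    "\<forall>q\<in>P. dist_span d q (set cs') \<le> dist_span d c (set cs')" using runs_snoc[OF Suc.prems(1)] by blast
  have l: "length cs' = n" "set cs' \<subseteq> P" using runs_props[OF cs(2)] by auto
  show ?case
  proof (cases "j < n")
    case True
    then show ?thesis using Suc.IH[OF cs(2) True Suc.prems(3)] cs(1) l by (simp add: nth_append)
  next
    case False
    then have j: "j = n" using Suc.prems by simp
    have S: "set cs' \<subseteq> carrier_vec d" using l P by auto
    show ?thesis using cs(4) Suc.prems(3) cs(3) P j l cs(1)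
      by (auto simp: dist_span_res[OF S] subset_iff)
  qed
qed

definition sa :: "real vec list \<Rightarrow> real vec list \<Rightarrow> real" where
  "sa R cs = (\<Sum>j<length cs. enorm (res R (res (take j cs) (cs ! j))))"

lemma sa_snoc: "sa R (cs @ [c]) = sa R cs + enorm (res R (res cs c))"
  unfolding sa_def by (simp add: nth_append)

lemma sa_nonneg: "sa R cs \<ge> 0" unfolding sa_def by (auto intro: sum_nonneg enorm_ge0)

lemma greedy_main: assumes P: "P \<subseteq> carrier_vec d" and R: "set R \<subseteq> carrier_vec d"
  shows "cs \<in> greedy_runs d P n \<Longrightarrow>
    (\<forall>x\<in>P. enorm (res R (res cs x)) \<le> enorm (res R x) + sa R cs) \<and>
    (\<forall>x\<in>P. enorm (res R x) \<le> enorm (res R (res cs x)) + sa R cs) \<and>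
    (\<forall>M. (\<forall>c\<in>set cs. enorm (res R c) \<le> M) \<longrightarrow> sa R cs \<le> (2 ^ n - 1) * M)"
proof (induction n arbitrary: cs)
  case 0 then show ?case by (simp add: sa_def)
next
  case (Suc n)
  obtain cs' c where cs: "cs = cs' @ [c]" "cs' \<in> greedy_runs d P n" "c \<in> P"
    "\<forall>q\<in>P. dist_span d q (set cs') \<le> dist_span d c (set cs')" using runs_snoc[OF Suc.prems(1)] by blast
  have l: "length cs' = n" "set cs' \<subseteq> P" using runs_props[OF cs(2)] by auto
  have S: "set cs' \<subseteq> carrier_vec d" using l P by auto
  have S2: "set (cs' @ [c]) \<subseteq> carrier_vec d" using S cs(3) P by auto
  have cc: "c \<in> carrier_vec d" using cs(3) P by auto
  let ?u = "res cs' c"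
  let ?F = "\<lambda>x. enorm (res R x)"
  have uc: "?u \<in> carrier_vec d" using S cc by simp
  note IH = Suc.IH[OF cs(2)]
  have sa: "sa R cs = sa R cs' + ?F ?u" unfolding cs(1) sa_snoc ..
  have step: "\<exists>t. \<bar>t\<bar> \<le> 1 \<and> res cs x = res cs' x - t \<cdot>\<^sub>v ?u" if x: "x \<in> P" for x
  proof -
    have xc: "x \<in> carrier_vec d" using x P by auto
    have d1: "dist_span d x (set cs') \<le> dist_span d c (set cs')" using cs(4) x by auto
    have "enorm (res cs' x) \<le> enorm ?u" using d1 unfolding dist_span_res[OF S xc] dist_span_res[OF S cc] .
    then show ?thesis using res_step[OF S2 xc] cs(1) by auto
  qed
  have Fu: "?F (t \<cdot>\<^sub>v ?u) \<le> ?F ?u" if "\<bar>t\<bar> \<le> 1" for t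
  proof -
    have "?F (t \<cdot>\<^sub>v ?u) = \<bar>t\<bar> * ?F ?u" using R uc by (simp add: res_smult enorm_smult)
    also have "\<dots> \<le> ?F ?u" using that enorm_ge0[of "res R ?u"] by (simp add: mult_left_le_one_le)
    finally show ?thesis .
  qed
  have A: "\<forall>x\<in>P. ?F (res cs x) \<le> ?F x + sa R cs"
  proof
    fix x assume x: "x \<in> P"
    obtain t where t: "\<bar>t\<bar> \<le> 1" "res cs x = res cs' x - t \<cdot>\<^sub>v ?u" using step[OF x] by blast
    have xc: "res cs' x \<in> carrier_vec d" using x P S by auto
    have "?F (res cs x) \<le> ?F (res cs' x) + \<bar>t\<bar> * ?F ?u" unfolding t(2) by (rule f_sub(1)[OF R xc uc])
    also have "\<bar>t\<bar> * ?F ?u \<le> ?F ?u" using t(1) enorm_ge0[of "res R ?u"] by (simp add: mult_left_le_one_le)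
    finally show "?F (res cs x) \<le> ?F x + sa R cs" using IH x sa by auto
  qed
  have B: "\<forall>x\<in>P. ?F x \<le> ?F (res cs x) + sa R cs"
  proof
    fix x assume x: "x \<in> P"
    obtain t where t: "\<bar>t\<bar> \<le> 1" "res cs x = res cs' x - t \<cdot>\<^sub>v ?u" using step[OF x] by blast
    have xc: "res cs' x \<in> carrier_vec d" using x P S by auto
    have "?F (res cs' x) \<le> ?F (res cs x) + \<bar>t\<bar> * ?F ?u" unfolding t(2) by (rule f_sub(2)[OF R xc uc])
    also have "\<bar>t\<bar> * ?F ?u \<le> ?F ?u" using t(1) enorm_ge0[of "res R ?u"] by (simp add: mult_left_le_one_le)
    finally show "?F x \<le> ?F (res cs x) + sa R cs" using IH x sa by force
  qed
  have C: "\<forall>M. (\<forall>c\<in>set cs. ?F c \<le> M) \<longrightarrow> sa R cs \<le> (2 ^ Suc n - 1) * M"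
  proof (intro allI impI)
    fix M assume M: "\<forall>c\<in>set cs. ?F c \<le> M"
    have s1: "sa R cs' \<le> (2 ^ n - 1) * M" using IH M cs(1) by auto
    have "?F ?u \<le> ?F c + sa R cs'" using IH cs(3) by auto
    also have "\<dots> \<le> M + sa R cs'" using M cs(1) by auto
    finally have "sa R cs \<le> sa R cs' + M + sa R cs'" using sa by simp
    also have "\<dots> \<le> (2 ^ Suc n - 1) * M" using s1 by (simp add: algebra_simps)
    finally show "sa R cs \<le> (2 ^ Suc n - 1) * M" .
  qed
  show ?case using A B C by blast
qed

lemma metric_lemma:
  assumes P: "P \<subseteq> carrier_vec d" and cs: "cs \<in> greedy_runs d P n" and n: "1 \<le> n"
    and R: "set R \<subseteq> carrier_vec d" and lenR: "length R < n" and p: "p \<in> P"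
    and M: "\<forall>c\<in>set cs. enorm (res R c) \<le> M"
  shows "enorm (res R p) \<le> 2 ^ (n + 1) * M"
proof -
  have l: "length cs = n" "set cs \<subseteq> P" using runs_props[OF cs] by auto
  have Sc: "set cs \<subseteq> carrier_vec d" using l P by auto
  have tc: "set (take j cs) \<subseteq> carrier_vec d" for j using Sc set_take_subset[of j cs] by auto
  have csj: "j < n \<Longrightarrow> cs ! j \<in> P" for j using l by auto
  have pc: "p \<in> carrier_vec d" using p P by auto
  note GM = greedy_main[OF P R cs]
  define U where "U = map (\<lambda>j. res (take j cs) (cs ! j)) [0..<n]"
  have lU: "length U = n" unfolding U_def by simp
  have Uj: "j < n \<Longrightarrow> U ! j = res (take j cs) (cs ! j)" for j unfolding U_def by simp
  have Uc: "set U \<subseteq> carrier_vec d" unfolding U_def using tc Sc l by (auto simp: subset_iff)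
  have saU: "sa R cs = (\<Sum>j<length U. enorm (res R (U ! j)))" unfolding sa_def lU l(1) using Uj by simp
  have orth1: "U ! i \<bullet> U ! j = 0" if ij: "i < j" "j < n" for i j
  proof -
    have ci: "cs ! i \<in> carrier_vec d" using Sc l ij by auto
    have ui: "U ! i \<in> carrier_vec d" using Uc lU ij by auto
    have mem: "cs ! i \<in> set (take j cs)"
    proof -
      have "take j cs ! i = cs ! i" using ij by simp
      moreover have "i < length (take j cs)" using ij l by simp
      ultimately show ?thesis by (metis nth_mem)
    qed
    have sub: "set (take i cs) \<subseteq> set (take j cs)" using ij by (simp add: set_take_subset_set_take)
    have a: "cs ! i \<in> lin_span d (set (take j cs))" using span_elem[OF mem ci] .
    have b: "cs ! i - U ! i \<in> lin_span d (set (take j cs))"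
      using res_diff[OF tc ci, of i] span_mono[OF sub] Uj ij by auto
    have e: "cs ! i - (cs ! i - U ! i) = U ! i" using ci ui by (intro eq_vecI) auto
    have uis: "U ! i \<in> lin_span d (set (take j cs))" using span_minus[OF tc a b] unfolding e .
    have cj: "cs ! j \<in> carrier_vec d" using Sc l ij by auto
    have "U ! i \<bullet> res (take j cs) (cs ! j) = 0" by (rule res_orth[OF tc cj uis])
    then show ?thesis using Uj ij by simp
  qed
  have orth: "U ! i \<bullet> U ! j = 0" if "i < length U" "j < length U" "i \<noteq> j" for i j
  proof (cases "i < j")
    case True then show ?thesis using orth1 that lU by auto
  next
    case False
    then have "j < i" using that by simp
    then have "U ! j \<bullet> U ! i = 0" using orth1 that lU by auto
    moreover have "U ! i \<in> carrier_vec d" "U ! j \<in> carrier_vec d" using Uc that by auto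
    ultimately show ?thesis using comm_scalar_prod by metis
  qed
  define r where "r = enorm (U ! (n - 1))"
  have big: "r \<le> enorm (U ! j)" if j: "j < length U" for j
  proof -
    have j': "j \<le> n - 1" using j lU by simp
    have tk: "take (n - 1) cs = take j cs @ take (n - 1 - j) (drop j cs)"
    proof -
      have "j + (n - 1 - j) = n - 1" using j' by (rule le_add_diff_inverse)
      then have "take (n - 1) cs = take (j + (n - 1 - j)) cs" by simp
      then show ?thesis by (simp only: take_add)
    qed
    have tks: "set (take j cs @ take (n - 1 - j) (drop j cs)) \<subseteq> carrier_vec d"
      using tc[of "n - 1"] unfolding tk .
    have last: "cs ! (n - 1) \<in> carrier_vec d" using Sc l n by auto
    have "r = enorm (res (take (n - 1) cs) (cs ! (n - 1)))" unfolding r_def using Uj n by simp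
    also have "\<dots> \<le> enorm (res (take j cs) (cs ! (n - 1)))"
      unfolding tk by (rule res_mono_app[OF tks last])
    also have "\<dots> \<le> enorm (res (take j cs) (cs ! j))"
      by (rule runs_greedy[OF P cs]) (use j lU csj n in auto)
    finally show ?thesis using Uj j lU by simp
  qed
  have rsum: "r \<le> sa R cs" unfolding saU
    by (rule z_lemma[OF Uc R _ orth big]) (use lenR lU in auto)
  have resp: "enorm (res cs p) \<le> r"
  proof -
    have cs_eq: "cs = take (n - 1) cs @ [cs ! (n - 1)]"
    proof -
      have "cs = take (Suc (n - 1)) cs" using l n by simp
      also have "\<dots> = take (n - 1) cs @ [cs ! (n - 1)]" by (rule take_Suc_conv_app_nth) (use l n in simp)
      finally show ?thesis .
    qed
    have css: "set (take (n - 1) cs @ [cs ! (n - 1)]) \<subseteq> carrier_vec d" using Sc unfolding cs_eq[symmetric] .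
    have "enorm (res cs p) \<le> enorm (res (take (n - 1) cs) p)"
      by (subst cs_eq, rule res_mono_app[OF css pc])
    also have "\<dots> \<le> enorm (res (take (n - 1) cs) (cs ! (n - 1)))"
      by (rule runs_greedy[OF P cs]) (use n p in auto)
    finally show ?thesis unfolding r_def using Uj n by simp
  qed
  have M0: "M \<ge> 0"
  proof -
    have "cs ! 0 \<in> set cs" using l n by auto
    then show ?thesis using M enorm_ge0 by (meson order_trans)
  qed
  have "enorm (res R p) \<le> enorm (res R (res cs p)) + sa R cs" using GM p by blast
  also have "enorm (res R (res cs p)) \<le> enorm (res cs p)"
    by (rule res_le_norm[OF R]) (use Sc pc in simp)
  also have "sa R cs \<le> (2 ^ n - 1) * M" using GM M by blast
  finally have "enorm (res R p) \<le> r + (2 ^ n - 1) * M" using resp by linarith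
  then have "enorm (res R p) \<le> 2 * ((2 ^ n - 1) * M)" using rsum \<open>sa R cs \<le> (2 ^ n - 1) * M\<close> by linarith
  also have "\<dots> \<le> 2 ^ (n + 1) * M" using M0 by (simp add: algebra_simps)
  finally show ?thesis .
qed

lemma replace_lemma:
  assumes P: "P \<subseteq> carrier_vec d" and cs: "cs \<in> greedy_runs d P k" and k: "1 \<le> k"
    and S: "set S \<subseteq> carrier_vec d" and lS: "length S = k" and j: "j < k" and Sj: "S ! j \<in> P"
  shows "\<exists>c\<in>set cs. gram_det d (S[j := c]) \<ge> gram_det d S / 4 ^ (k + 1)"
proof -
  let ?R = "del j S"
  have l: "length cs = k" "set cs \<subseteq> P" using runs_props[OF cs] by auto
  have R: "set ?R \<subseteq> carrier_vec d" using S set_del[of j S] by auto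
  have lR: "length ?R < k" using lS j by simp
  let ?F = "\<lambda>x. enorm (res ?R x)"
  have ne: "set cs \<noteq> {}" using l k by auto
  have "Max (?F ` set cs) \<in> ?F ` set cs" by (rule Max_in) (use ne in auto)
  then obtain c where c: "c \<in> set cs" "?F c = Max (?F ` set cs)" by auto
  have Mx: "\<forall>c'\<in>set cs. ?F c' \<le> ?F c" using c(2) by auto
  have cc: "c \<in> carrier_vec d" using c l P by auto
  have Sjc: "S ! j \<in> carrier_vec d" using Sj P by auto
  have jS: "j < length S" using j lS by simp
  have le: "?F (S ! j) \<le> 2 ^ (k + 1) * ?F c"
    by (rule metric_lemma[OF P cs k R lR Sj Mx])
  have G0: "gram_det d ?R \<ge> 0" by (rule gram_det_nonneg[OF R])
  have "gram_det d S = gram_det d (S[j := S ! j])" by simp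
  also have "\<dots> = gram_det d ?R * (?F (S ! j))^2" by (rule gram_det_res[OF S jS Sjc])
  also have "\<dots> \<le> gram_det d ?R * (2 ^ (k + 1) * ?F c)^2"
    by (rule mult_left_mono[OF _ G0], rule power_mono[OF le enorm_ge0])
  also have "\<dots> = 4 ^ (k + 1) * (gram_det d ?R * (?F c)^2)"
  proof -
    have e4: "((2::real) ^ (k + 1))^2 = 4 ^ (k + 1)"
      by (simp add: power2_eq_square power_mult_distrib[symmetric])
    have "(2 ^ (k + 1) * ?F c)^2 = 4 ^ (k + 1) * (?F c)^2" by (simp only: power_mult_distrib e4)
    then show ?thesis by (simp only: mult.left_commute)
  qed
  also have "gram_det d ?R * (?F c)^2 = gram_det d (S[j := c])" by (rule gram_det_res[OF S jS cc, symmetric])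
  finally have "gram_det d S \<le> 4 ^ (k + 1) * gram_det d (S[j := c])" .
  then have "gram_det d S / 4 ^ (k + 1) \<le> gram_det d (S[j := c])" by (simp add: field_simps)
  then show ?thesis using c(1) by blast
qed

lemma maxdet_set_finite: "finite X \<Longrightarrow>
  finite {gram_det d vs | vs. distinct vs \<and> set vs \<subseteq> X \<and> length vs = k}"
proof -
  assume X: "finite X"
  have "{gram_det d vs | vs. distinct vs \<and> set vs \<subseteq> X \<and> length vs = k} \<subseteq>
        gram_det d ` {vs. set vs \<subseteq> X \<and> length vs = k}" by auto
  moreover have "finite {vs. set vs \<subseteq> X \<and> length vs = k}" using finite_lists_length_eq[OF X] .
  ultimately show ?thesis using finite_subset by blast
qed

lemma maxdet_ge: assumes X: "finite X" and vs: "distinct vs" "set vs \<subseteq> X" "length vs = k"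
  shows "gram_det d vs \<le> maxdet d k X"
proof -
  have ex: "\<exists>vs. distinct vs \<and> set vs \<subseteq> X \<and> length vs = k" using vs by blast
  show ?thesis unfolding maxdet_def using ex
    by (simp, intro Max_ge[OF maxdet_set_finite[OF X]]) (use vs in blast)
qed

lemma maxdet_nonneg: assumes X: "finite X" "X \<subseteq> carrier_vec d"
  shows "maxdet d k X \<ge> 0"
proof (cases "\<exists>vs. distinct vs \<and> set vs \<subseteq> X \<and> length vs = k")
  case True
  then obtain vs where vs: "distinct vs" "set vs \<subseteq> X" "length vs = k" by blast
  have "0 \<le> gram_det d vs" using gram_det_nonneg[of vs d] vs X by auto
  also have "\<dots> \<le> maxdet d k X" by (rule maxdet_ge[OF X(1) vs])
  finally show ?thesis .
next
  case False then show ?thesis unfolding maxdet_def by (subst if_not_P[OF False]) simp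
qed

lemma maxdet_attained: assumes X: "finite X"
  and ex: "\<exists>vs. distinct vs \<and> set vs \<subseteq> X \<and> length vs = k"
  shows "\<exists>vs. distinct vs \<and> set vs \<subseteq> X \<and> length vs = k \<and> maxdet d k X = gram_det d vs"
proof -
  let ?A = "{gram_det d vs | vs. distinct vs \<and> set vs \<subseteq> X \<and> length vs = k}"
  have "Max ?A \<in> ?A" by (rule Max_in[OF maxdet_set_finite[OF X]]) (use ex in blast)
  then show ?thesis unfolding maxdet_def using ex by auto
qed

lemma iterate:
  assumes k: "1 \<le> k"
    and Uprop: "\<And>x. x \<in> U \<Longrightarrow> \<exists>P cs. P \<subseteq> carrier_vec d \<and> cs \<in> greedy_runs d P k \<and> x \<in> P \<and> set cs \<subseteq> V"
    and Uc: "U \<subseteq> carrier_vec d"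
  shows "n \<le> k \<Longrightarrow> length S = k \<Longrightarrow> set S \<subseteq> carrier_vec d \<Longrightarrow> (\<forall>i<k. i < n \<longrightarrow> S ! i \<in> U) \<Longrightarrow>
    (\<forall>i<k. n \<le> i \<longrightarrow> S ! i \<in> V) \<Longrightarrow>
    \<exists>T. length T = k \<and> set T \<subseteq> V \<and> set T \<subseteq> carrier_vec d \<and> gram_det d T \<ge> gram_det d S / (4 ^ (k + 1)) ^ n"
proof (induction n arbitrary: S)
  case 0
  have "set S \<subseteq> V" using 0 by (auto simp: in_set_conv_nth)
  then show ?case using 0 by (intro exI[of _ S]) auto
next
  case (Suc n)
  let ?K = "(4::real) ^ (k + 1)"
  have n: "n < k" using Suc.prems by simp
  have Sn: "S ! n \<in> U" using Suc.prems(4) n by auto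
  obtain P cs where P: "P \<subseteq> carrier_vec d" "cs \<in> greedy_runs d P k" "S ! n \<in> P" "set cs \<subseteq> V"
    using Uprop[OF Sn] by blast
  obtain c where c: "c \<in> set cs" "gram_det d (S[n := c]) \<ge> gram_det d S / ?K"
    using replace_lemma[OF P(1,2) k Suc.prems(3,2) n P(3)] by blast
  have cP: "c \<in> P" using runs_props[OF P(2)] c(1) by auto
  have cc: "c \<in> carrier_vec d" using cP P(1) by auto
  have cV: "c \<in> V" using c(1) P(4) by auto
  let ?S = "S[n := c]"
  have S1: "length ?S = k" using Suc.prems by simp
  have S2: "set ?S \<subseteq> carrier_vec d" using Suc.prems(3) cc by (meson set_update_subsetI)
  have S3: "\<forall>i<k. i < n \<longrightarrow> ?S ! i \<in> U" using Suc.prems(4) by auto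
  have S4: "\<forall>i<k. n \<le> i \<longrightarrow> ?S ! i \<in> V" using Suc.prems(5) cV Suc.prems(2) by (auto simp: nth_list_update)
  obtain T where T: "length T = k" "set T \<subseteq> V" "set T \<subseteq> carrier_vec d" "gram_det d T \<ge> gram_det d ?S / ?K ^ n"
    using Suc.IH[OF _ S1 S2 S3 S4] n by auto
  have "gram_det d S / ?K ^ Suc n = (gram_det d S / ?K) / ?K ^ n" by (simp add: field_simps)
  also have "\<dots> \<le> gram_det d ?S / ?K ^ n" by (rule divide_right_mono[OF c(2)]) simp
  also have "\<dots> \<le> gram_det d T" by (rule T(4))
  finally show ?case using T by blast
qed

lemma const_bound: "1 \<le> k \<Longrightarrow> ((4::real) ^ (k + 1)) ^ k \<le> 1 * 16 ^ (k ^ 2)"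
proof -
  assume k: "1 \<le> k"
  have "((4::real) ^ (k + 1)) ^ k = 4 ^ ((k + 1) * k)" by (rule power_mult[symmetric])
  also have "\<dots> \<le> 4 ^ (2 * k ^ 2)"
  proof (rule power_increasing)
    have "k \<le> k ^ 2" using k by (simp add: power2_eq_square)
    then show "(k + 1) * k \<le> 2 * k ^ 2" by (simp add: power2_eq_square algebra_simps)
  qed simp
  also have "\<dots> = 16 ^ (k ^ 2)" by (simp add: power_mult)
  finally show ?thesis by simp
qed

lemma main_part:
  fixes d k :: nat and c :: "real vec set \<Rightarrow> real vec set"
  assumes k: "1 \<le> k \<and> k \<le> d"
  and hc: "(\<forall>P. c P \<subseteq> P) \<and>
        (\<forall>P. finite P \<and> P \<subseteq> carrier_vec d \<and> P \<noteq> {} \<longrightarrow> c P \<in> greedy_outputs d k P)"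
  shows "(\<forall>P. finite P \<and> P \<subseteq> carrier_vec d \<longrightarrow> card (c P) \<le> k) \<and>
        (\<forall>(m :: nat) (Ps :: nat \<Rightarrow> real vec set).
           1 \<le> m \<and> (\<forall>i<m. finite (Ps i) \<and> Ps i \<subseteq> carrier_vec d) \<longrightarrow>
           maxdet d k (\<Union>i<m. c (Ps i)) \<ge> maxdet d k (\<Union>i<m. Ps i) / (1 * 16 ^ (k ^ 2)))"
proof (intro conjI allI impI)
  have k1: "1 \<le> k" using k by simp
  have out: "\<exists>cs. cs \<in> greedy_runs d P k \<and> c P = set cs"
    if "finite P" "P \<subseteq> carrier_vec d" "P \<noteq> {}" for P
    using hc that unfolding greedy_outputs_def by blast
  {
    fix P :: "real vec set" assume P: "finite P \<and> P \<subseteq> carrier_vec d"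
    show "card (c P) \<le> k"
    proof (cases "P = {}")
      case True then show ?thesis using hc by (metis card.empty subset_empty zero_le)
    next
      case False
      then obtain cs where cs: "cs \<in> greedy_runs d P k" "c P = set cs" using out P by blast
      then show ?thesis using runs_props[OF cs(1)] card_length[of cs] by simp
    qed
  }
  fix m :: nat and Ps :: "nat \<Rightarrow> real vec set"
  assume mP: "1 \<le> m \<and> (\<forall>i<m. finite (Ps i) \<and> Ps i \<subseteq> carrier_vec d)"
  let ?U = "\<Union>i<m. Ps i" and ?V = "\<Union>i<m. c (Ps i)"
  let ?K = "(4::real) ^ (k + 1)"
  have Uf: "finite ?U" using mP by auto
  have Uc: "?U \<subseteq> carrier_vec d" using mP by auto
  have VU: "?V \<subseteq> ?U" using hc by blast
  have Vf: "finite ?V" using finite_subset[OF VU Uf] .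
  have Vc: "?V \<subseteq> carrier_vec d" using VU Uc by blast
  have V0: "maxdet d k ?V \<ge> 0" by (rule maxdet_nonneg[OF Vf Vc])
  have U0: "maxdet d k ?U \<ge> 0" by (rule maxdet_nonneg[OF Uf Uc])
  have Uprop: "\<exists>P cs. P \<subseteq> carrier_vec d \<and> cs \<in> greedy_runs d P k \<and> x \<in> P \<and> set cs \<subseteq> ?V" if x: "x \<in> ?U" for x
  proof -
    obtain i where i: "i < m" "x \<in> Ps i" using x by blast
    have "finite (Ps i)" "Ps i \<subseteq> carrier_vec d" "Ps i \<noteq> {}" using mP i by auto
    then obtain cs where cs: "cs \<in> greedy_runs d (Ps i) k" "c (Ps i) = set cs" using out by blast
    have "set cs \<subseteq> ?V" using cs(2) i(1) by blast
    then show ?thesis using cs(1) i(2) \<open>Ps i \<subseteq> carrier_vec d\<close> by blast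
  qed
  have main: "maxdet d k ?U / ?K ^ k \<le> maxdet d k ?V"
  proof (cases "\<exists>vs. distinct vs \<and> set vs \<subseteq> ?U \<and> length vs = k")
    case False
    then have "maxdet d k ?U = 0" unfolding maxdet_def by (subst if_not_P[OF False]) simp
    then show ?thesis using V0 by simp
  next
    case True
    obtain S where S: "distinct S" "set S \<subseteq> ?U" "length S = k" "maxdet d k ?U = gram_det d S"
      using maxdet_attained[OF Uf True] by blast
    have Sc: "set S \<subseteq> carrier_vec d" using S(2) Uc by blast
    obtain T where T: "length T = k" "set T \<subseteq> ?V" "set T \<subseteq> carrier_vec d" "gram_det d T \<ge> gram_det d S / ?K ^ k"
      using iterate[OF k1 Uprop Uc, of k S] S Sc by (auto simp: subset_iff nth_mem)
    show ?thesis
    proof (cases "gram_det d T > 0")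
      case True
      have "distinct T" by (rule gram_det_pos_distinct[OF T(3) True])
      then have "gram_det d T \<le> maxdet d k ?V" by (rule maxdet_ge[OF Vf _ T(2) T(1)])
      then show ?thesis using T(4) S(4) by simp
    next
      case False
      then show ?thesis using T(4) S(4) V0 by simp
    qed
  qed
  have "maxdet d k ?U / (1 * 16 ^ (k ^ 2)) \<le> maxdet d k ?U / ?K ^ k"
    by (rule divide_left_mono[OF const_bound[OF k1] U0]) simp
  then show "maxdet d k ?U / (1 * 16 ^ (k ^ 2)) \<le> maxdet d k ?V" using main by linarith
qed

theorem theorem1p1:
  shows "\<exists>A C :: real. A > 0 \<and> C > 0 \<and>
    (\<forall>d k :: nat. 1 \<le> k \<and> k \<le> d \<longrightarrow>
      (\<forall>c :: real vec set \<Rightarrow> real vec set.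
        (\<forall>P. c P \<subseteq> P) \<and>
        (\<forall>P. finite P \<and> P \<subseteq> carrier_vec d \<and> P \<noteq> {} \<longrightarrow> c P \<in> greedy_outputs d k P)
        \<longrightarrow>
        (\<forall>P. finite P \<and> P \<subseteq> carrier_vec d \<longrightarrow> card (c P) \<le> k) \<and>
        (\<forall>(m :: nat) (Ps :: nat \<Rightarrow> real vec set).
           1 \<le> m \<and> (\<forall>i<m. finite (Ps i) \<and> Ps i \<subseteq> carrier_vec d) \<longrightarrow>
           maxdet d k (\<Union>i<m. c (Ps i)) \<ge> maxdet d k (\<Union>i<m. Ps i) / (A * C ^ (k ^ 2)))))"
proof -
  have X: "(\<forall>d k :: nat. 1 \<le> k \<and> k \<le> d \<longrightarrow>
      (\<forall>c :: real vec set \<Rightarrow> real vec set.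
        (\<forall>P. c P \<subseteq> P) \<and>
        (\<forall>P. finite P \<and> P \<subseteq> carrier_vec d \<and> P \<noteq> {} \<longrightarrow> c P \<in> greedy_outputs d k P)
        \<longrightarrow>
        (\<forall>P. finite P \<and> P \<subseteq> carrier_vec d \<longrightarrow> card (c P) \<le> k) \<and>
        (\<forall>(m :: nat) (Ps :: nat \<Rightarrow> real vec set).
           1 \<le> m \<and> (\<forall>i<m. finite (Ps i) \<and> Ps i \<subseteq> carrier_vec d) \<longrightarrow>
           maxdet d k (\<Union>i<m. c (Ps i)) \<ge> maxdet d k (\<Union>i<m. Ps i) / (1 * 16 ^ (k ^ 2)))))"
  proof (intro allI impI)
    fix d k :: nat and c :: "real vec set \<Rightarrow> real vec set"
    assume a: "1 \<le> k \<and> k \<le> d" and b: "(\<forall>P. c P \<subseteq> P) \<and>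
        (\<forall>P. finite P \<and> P \<subseteq> carrier_vec d \<and> P \<noteq> {} \<longrightarrow> c P \<in> greedy_outputs d k P)"
    show "(\<forall>P. finite P \<and> P \<subseteq> carrier_vec d \<longrightarrow> card (c P) \<le> k) \<and>
        (\<forall>(m :: nat) (Ps :: nat \<Rightarrow> real vec set).
           1 \<le> m \<and> (\<forall>i<m. finite (Ps i) \<and> Ps i \<subseteq> carrier_vec d) \<longrightarrow>
           maxdet d k (\<Union>i<m. c (Ps i)) \<ge> maxdet d k (\<Union>i<m. Ps i) / (1 * 16 ^ (k ^ 2)))"
      by (rule main_part[OF a b])
  qed
  show ?thesis
    by (rule exI[of _ "1::real"], rule exI[of _ "16::real"], intro conjI, simp, simp, rule X)
qed

end
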